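(* Let $\vec H$ be a directed graph on $k$ vertices with $\chi(\vec H)\le p$, and let $0<\delta<\frac1{8k}$. There exists $n_0$, depending only on $\vec H$ (and $\delta$), such that for every $n>n_0$ the following holds. Let $G$ be a $p$-partite graph on $n$ vertices with parts $V_1,\dots,V_p$, each of size at least $10^k\delta n$, let $\vec G$ be a relevant orientation of $G$ (with respect to this partition and $\delta$), and let $c:V(\vec H)\to[p]$ be a proper colouring of $\vec H$. Then there is an embedding of $\vec H$ into $\vec G$ (as a directed subgraph) such that each vertex $v$ of $\vec H$ is mapped into $V_{c(v)}$.
   Context: $\chi(\vec H)$ is the chromatic number of the underlying graph of $\vec H$; a proper colouring of $\vec H$ is one of its underlying graph. Given a partition $V(G)=V_1\cup\dots\cup V_p$ and $\delta>0$, an orientation $\vec G$ of $G$ is relevant if for every $i\neq j$ and all $X_1\subseteq V_i$, $X_2\subseteq V_j$ with $|X_1|,|X_2|>2\delta n$, there are at least $|X_1||X_2|/10$ edges of $\vec G$ directed from $X_1$ to $X_2$. *)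

theory Defs
  imports Complex_Main
begin

definition oriented_graph :: "'a set \<Rightarrow> ('a \<times> 'a) set \<Rightarrow> bool" where
  "oriented_graph VH AH \<longleftrightarrow> finite VH \<and> AH \<subseteq> VH \<times> VH
     \<and> (\<forall>x. (x, x) \<notin> AH) \<and> (\<forall>x y. (x, y) \<in> AH \<longrightarrow> (y, x) \<notin> AH)"

definition proper_colouring :: "'a set \<Rightarrow> ('a \<times> 'a) set \<Rightarrow> nat \<Rightarrow> ('a \<Rightarrow> nat) \<Rightarrow> bool" where
  "proper_colouring VH AH m c \<longleftrightarrow> (\<forall>v\<in>VH. c v < m) \<and> (\<forall>(u, v)\<in>AH. c u \<noteq> c v)"

definition chromatic_number :: "'a set \<Rightarrow> ('a \<times> 'a) set \<Rightarrow> nat" where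
  "chromatic_number VH AH = (LEAST m. \<exists>c. proper_colouring VH AH m c)"

definition p_partite_graph :: "'v set \<Rightarrow> ('v \<times> 'v) set \<Rightarrow> nat \<Rightarrow> (nat \<Rightarrow> 'v set) \<Rightarrow> bool" where
  "p_partite_graph V E p Vs \<longleftrightarrow> finite V \<and> E \<subseteq> V \<times> V \<and> sym E \<and> (\<forall>x. (x, x) \<notin> E)
     \<and> (\<Union>i<p. Vs i) = V
     \<and> (\<forall>i<p. \<forall>j<p. i \<noteq> j \<longrightarrow> Vs i \<inter> Vs j = {})
     \<and> (\<forall>i<p. \<forall>x\<in>Vs i. \<forall>y\<in>Vs i. (x, y) \<notin> E)"

definition orientation_of :: "('v \<times> 'v) set \<Rightarrow> ('v \<times> 'v) set \<Rightarrow> bool" where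
  "orientation_of E A \<longleftrightarrow> A \<subseteq> E \<and> (\<forall>x y. (x, y) \<in> E \<longrightarrow> ((x, y) \<in> A \<longleftrightarrow> (y, x) \<notin> A))"

definition relevant :: "('v \<times> 'v) set \<Rightarrow> nat \<Rightarrow> (nat \<Rightarrow> 'v set) \<Rightarrow> real \<Rightarrow> nat \<Rightarrow> bool" where
  "relevant A p Vs \<delta> n \<longleftrightarrow>
     (\<forall>i<p. \<forall>j<p. i \<noteq> j \<longrightarrow> (\<forall>X1 X2. X1 \<subseteq> Vs i \<longrightarrow> X2 \<subseteq> Vs j
        \<longrightarrow> real (card X1) > 2 * \<delta> * real n \<longrightarrow> real (card X2) > 2 * \<delta> * real n
        \<longrightarrow> real (card (A \<inter> (X1 \<times> X2))) \<ge> real (card X1) * real (card X2) / 10))"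

end

theory Submission
  imports Defs
begin

lemma bad_out:
  assumes rel: "relevant A p Vs \<delta> n" and ij: "i < p" "j < p" "i \<noteq> j"
    and d: "0 \<le> \<delta>"
    and B: "B \<subseteq> Vs i" and X: "X \<subseteq> Vs j" and Xc: "real (card X) > 2 * \<delta> * real n"
    and low: "\<forall>x\<in>B. real (card {y\<in>X. (x, y) \<in> A}) < real (card X) / 10"
  shows "real (card B) \<le> 2 * \<delta> * real n"
proof (rule ccontr)
  assume "\<not> ?thesis"
  hence Bc: "real (card B) > 2 * \<delta> * real n" by simp
  have "2 * \<delta> * real n \<ge> 0" using d by simp
  hence "card B > 0" "card X > 0" using Bc Xc by linarith+
  hence fB: "finite B" "B \<noteq> {}" and fX: "finite X" by (auto simp: card_gt_0_iff)
  have r: "real (card (A \<inter> (B \<times> X))) \<ge> real (card B) * real (card X) / 10"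
    using rel ij B X Bc Xc unfolding relevant_def by blast
  have eq: "A \<inter> (B \<times> X) = (SIGMA x:B. {y\<in>X. (x, y) \<in> A})" by auto
  have "card (A \<inter> (B \<times> X)) = (\<Sum>x\<in>B. card {y\<in>X. (x, y) \<in> A})"
    unfolding eq using fB fX by simp
  hence "real (card (A \<inter> (B \<times> X))) = (\<Sum>x\<in>B. real (card {y\<in>X. (x, y) \<in> A}))" by simp
  also have "\<dots> < (\<Sum>x\<in>B. real (card X) / 10)"
    using fB low by (intro sum_strict_mono) auto
  also have "\<dots> = real (card B) * real (card X) / 10" by simp
  finally show False using r by simp
qed

lemma relevant_converse:
  assumes "relevant A p Vs \<delta> n" shows "relevant (converse A) p Vs \<delta> n"
  unfolding relevant_def
proof (intro allI impI)
  fix i j X1 X2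
  assume h: "i < p" "j < p" "i \<noteq> j" "X1 \<subseteq> Vs i" "X2 \<subseteq> Vs j"
    "2 * \<delta> * real n < real (card X1)" "2 * \<delta> * real n < real (card X2)"
  have "converse A \<inter> (X1 \<times> X2) = converse (A \<inter> (X2 \<times> X1))" by auto
  hence "card (converse A \<inter> (X1 \<times> X2)) = card (A \<inter> (X2 \<times> X1))" by simp
  moreover have "real (card (A \<inter> (X2 \<times> X1))) \<ge> real (card X2) * real (card X1) / 10"
    using assms h unfolding relevant_def by blast
  ultimately show "real (card X1) * real (card X2) / 10 \<le> real (card (converse A \<inter> (X1 \<times> X2)))"
    by (simp add: mult.commute)
qed

lemma bad_in:
  assumes rel: "relevant A p Vs \<delta> n" and ij: "i < p" "j < p" "i \<noteq> j"
    and d: "0 \<le> \<delta>"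
    and B: "B \<subseteq> Vs i" and X: "X \<subseteq> Vs j" and Xc: "real (card X) > 2 * \<delta> * real n"
    and low: "\<forall>x\<in>B. real (card {y\<in>X. (y, x) \<in> A}) < real (card X) / 10"
  shows "real (card B) \<le> 2 * \<delta> * real n"
  using bad_out[OF relevant_converse[OF rel] ij d B X Xc] low by simp

lemma ten_pow: "m \<ge> 1 \<Longrightarrow> (10::real) ^ m \<ge> 2 * real m + 8"
proof (induction m rule: dec_induct)
  case base then show ?case by simp
next
  case (step m) then show ?case by simp
qed


locale emb =
  fixes VH :: "'h set" and AH :: "('h \<times> 'h) set" and k :: nat and \<delta> :: real
    and p :: nat and n :: nat and V :: "nat set" and E :: "(nat \<times> nat) set"
    and Vs :: "nat \<Rightarrow> nat set" and A :: "(nat \<times> nat) set" and c :: "'h \<Rightarrow> nat"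
  assumes og: "oriented_graph VH AH" and cardVH: "card VH = k" and dpos: "0 < \<delta>"
    and big: "real k < 8 * \<delta> * real n"
    and pp: "p_partite_graph V E p Vs"
    and sizes: "\<forall>i<p. real (card (Vs i)) \<ge> 10 ^ k * \<delta> * real n"
    and rel: "relevant A p Vs \<delta> n" and pc: "proper_colouring VH AH p c"
begin

definition inv :: "'h set \<Rightarrow> ('h \<Rightarrow> nat) \<Rightarrow> ('h \<Rightarrow> nat set) \<Rightarrow> bool" where
  "inv S f C \<longleftrightarrow> S \<subseteq> VH \<and> inj_on f S \<and> (\<forall>v\<in>S. f v \<in> Vs (c v))
     \<and> (\<forall>a b. (a, b) \<in> AH \<longrightarrow> a \<in> S \<longrightarrow> b \<in> S \<longrightarrow> (f a, f b) \<in> A)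
     \<and> (\<forall>w\<in>VH - S. C w \<subseteq> Vs (c w) \<and> real (card (C w)) \<ge> 10 ^ (k - card S) * \<delta> * real n
          \<and> (\<forall>y\<in>C w. \<forall>v\<in>S. ((v, w) \<in> AH \<longrightarrow> (f v, y) \<in> A) \<and> ((w, v) \<in> AH \<longrightarrow> (y, f v) \<in> A)))"

lemma finVH: "finite VH" using og unfolding oriented_graph_def by blast
lemma AHsub: "AH \<subseteq> VH \<times> VH" using og unfolding oriented_graph_def by blast
lemma irr: "(x, x) \<notin> AH" using og unfolding oriented_graph_def by blast
lemma asy: "(x, y) \<in> AH \<Longrightarrow> (y, x) \<notin> AH" using og unfolding oriented_graph_def by blast
lemma col: "v \<in> VH \<Longrightarrow> c v < p" using pc unfolding proper_colouring_def by blast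
lemma colne: "(u, v) \<in> AH \<Longrightarrow> c u \<noteq> c v" using pc unfolding proper_colouring_def by blast
lemma finVs: "i < p \<Longrightarrow> finite (Vs i)"
proof -
  assume "i < p"
  hence "Vs i \<subseteq> V" using pp unfolding p_partite_graph_def by blast
  moreover have "finite V" using pp unfolding p_partite_graph_def by blast
  ultimately show ?thesis using finite_subset by blast
qed

lemma base: "inv {} f Vs'" if "Vs' = (\<lambda>w. Vs (c w))"
  using that sizes col by (auto simp: inv_def)

lemma step:
  assumes I: "inv S f C" and sk: "card S < k"
  shows "\<exists>S' f' C'. inv S' f' C' \<and> card S' = Suc (card S)"
proof -
  have SV: "S \<subseteq> VH" and inj: "inj_on f S" and fin: "\<forall>v\<in>S. f v \<in> Vs (c v)"
    and arcs: "\<forall>a b. (a, b) \<in> AH \<longrightarrow> a \<in> S \<longrightarrow> b \<in> S \<longrightarrow> (f a, f b) \<in> A"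
    and Cprop: "\<forall>w\<in>VH - S. C w \<subseteq> Vs (c w) \<and> real (card (C w)) \<ge> 10 ^ (k - card S) * \<delta> * real n
          \<and> (\<forall>y\<in>C w. \<forall>v\<in>S. ((v, w) \<in> AH \<longrightarrow> (f v, y) \<in> A) \<and> ((w, v) \<in> AH \<longrightarrow> (y, f v) \<in> A))"
    using I unfolding inv_def by blast+
  have finS: "finite S" using SV finVH finite_subset by blast
  have "VH - S \<noteq> {}"
  proof
    assume "VH - S = {}"
    hence "VH = S" using SV by blast
    thus False using sk cardVH by simp
  qed
  then obtain u where u: "u \<in> VH" "u \<notin> S" by blast
  define m where "m = k - card S"
  have m1: "m \<ge> 1" using sk m_def by simp
  have k1: "k \<ge> 1" using sk by simp
  have dn: "\<delta> * real n > 0" using big k1 by simp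
  have pw: "(10::real) ^ m \<ge> 2 * real m + 8" using ten_pow m1 by simp
  have C10: "\<forall>w\<in>VH - S. real (card (C w)) > 2 * \<delta> * real n"
  proof
    fix w assume "w \<in> VH - S"
    hence "real (card (C w)) \<ge> 10 ^ m * \<delta> * real n" using Cprop m_def by blast
    moreover have "10 ^ m * \<delta> * real n \<ge> 10 * (\<delta> * real n)"
    proof -
      have "real m \<ge> 1" using m1 by simp
      hence "(10::real) ^ m \<ge> 10" using pw by linarith
      hence "10 ^ m * (\<delta> * real n) \<ge> 10 * (\<delta> * real n)"
        using dn by (intro mult_right_mono) auto
      thus ?thesis by (simp add: mult.assoc)
    qed
    ultimately show "real (card (C w)) > 2 * \<delta> * real n" using dn by linarith
  qed
  have Cu: "C u \<subseteq> Vs (c u)" "real (card (C u)) \<ge> 10 ^ m * \<delta> * real n"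
    using Cprop u m_def by auto
  have finCu: "finite (C u)" using Cu(1) finVs col u(1) finite_subset by blast
  define W where "W = VH - S - {u}"
  define bad where "bad w = (if (u, w) \<in> AH then {x\<in>C u. real (card {y\<in>C w. (x, y) \<in> A}) < real (card (C w)) / 10}
     else if (w, u) \<in> AH then {x\<in>C u. real (card {y\<in>C w. (y, x) \<in> A}) < real (card (C w)) / 10} else {})" for w
  have badsmall: "real (card (bad w)) \<le> 2 * \<delta> * real n" if w: "w \<in> W" for w
  proof -
    have wV: "w \<in> VH - S" using w W_def by blast
    have Cw: "C w \<subseteq> Vs (c w)" using Cprop wV by blast
    have cu: "c u < p" "c w < p" using col u wV by auto
    show ?thesis
    proof (cases "(u, w) \<in> AH")
      case True
      have "c u \<noteq> c w" using colne True .
      then show ?thesis unfolding bad_def using True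
        by (intro bad_out[OF rel cu(1) cu(2) _ _ _ Cw]) (use dpos Cu C10 wV in auto)
    next
      case F: False
      show ?thesis
      proof (cases "(w, u) \<in> AH")
        case True
        have "c u \<noteq> c w" using colne True by metis
        then show ?thesis unfolding bad_def using True F
          by (intro bad_in[OF rel cu(1) cu(2) _ _ _ Cw]) (use dpos Cu C10 wV in auto)
      next
        case False
        then show ?thesis using F dn unfolding bad_def by simp
      qed
    qed
  qed
  define Bad where "Bad = (\<Union>w\<in>W. bad w)"
  have finW: "finite W" using finVH W_def by simp
  have cW: "real (card W) = real m - 1"
  proof -
    have "card W = card (VH - S) - 1" unfolding W_def using u finVH by (simp add: card_Diff_singleton)
    also have "card (VH - S) = k - card S" using card_Diff_subset[OF finS SV] cardVH by simp
    finally show ?thesis using m_def m1 by simp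
  qed
  have "card Bad \<le> (\<Sum>w\<in>W. card (bad w))" unfolding Bad_def by (rule card_UN_le[OF finW])
  hence "real (card Bad) \<le> (\<Sum>w\<in>W. real (card (bad w)))" by (metis of_nat_le_iff of_nat_sum)
  also have "\<dots> \<le> (\<Sum>w\<in>W. 2 * \<delta> * real n)" by (intro sum_mono badsmall)
  also have "\<dots> = (real m - 1) * (2 * \<delta> * real n)" using cW by simp
  finally have cBad: "real (card Bad) \<le> (real m - 1) * (2 * \<delta> * real n)" .
  have Badsub: "Bad \<subseteq> C u" unfolding Bad_def bad_def by auto
  have cfS: "card (f ` S) \<le> card S" by (rule card_image_le[OF finS])
  have "\<exists>x\<in>C u. x \<notin> Bad \<union> f ` S"
  proof (rule ccontr)
    assume "\<not> ?thesis"
    hence "C u \<subseteq> Bad \<union> f ` S" by blast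
    hence "card (C u) \<le> card (Bad \<union> f ` S)"
      using finCu Badsub finS by (intro card_mono) (auto intro: finite_subset)
    also have "\<dots> \<le> card Bad + card (f ` S)" by (rule card_Un_le)
    finally have "real (card (C u)) \<le> real (card Bad) + real (card S)" using cfS by linarith
    also have "\<dots> \<le> (real m - 1) * (2 * \<delta> * real n) + real (card S)" using cBad by linarith
    finally have A1: "10 ^ m * \<delta> * real n \<le> (real m - 1) * (2 * \<delta> * real n) + real (card S)"
      using Cu by linarith
    have "10 ^ m * \<delta> * real n \<ge> (2 * real m + 8) * (\<delta> * real n)"
      using pw dn by (simp add: mult.assoc mult_right_mono)
    moreover have "real (card S) < 8 * \<delta> * real n" using sk big by linarith
    ultimately show False using A1 dn by (simp add: algebra_simps)
  qed
  then obtain x where x: "x \<in> C u" "x \<notin> Bad" "x \<notin> f ` S" by blast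
  define C' where "C' w = (if (u, w) \<in> AH then {y\<in>C w. (x, y) \<in> A}
     else if (w, u) \<in> AH then {y\<in>C w. (y, x) \<in> A} else C w)" for w
  define f' where "f' = f(u := x)"
  have cardS': "card (insert u S) = Suc (card S)" using finS u by simp
  have km: "k - card (insert u S) = m - 1" using cardS' m_def by simp
  have pm: "(10::real) ^ m = 10 * 10 ^ (m - 1)" using m1
    by (metis Suc_diff_le diff_Suc_1 power_Suc)
  have "inv (insert u S) f' C'"
    unfolding inv_def
  proof (intro conjI)
    show "insert u S \<subseteq> VH" using SV u by blast
    show "inj_on f' (insert u S)" unfolding f'_def using inj x(3) u(2)
      by (auto simp: inj_on_def)
    show "\<forall>v\<in>insert u S. f' v \<in> Vs (c v)" unfolding f'_def using fin x(1) Cu(1) u(2) by auto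
    show "\<forall>a b. (a, b) \<in> AH \<longrightarrow> a \<in> insert u S \<longrightarrow> b \<in> insert u S \<longrightarrow> (f' a, f' b) \<in> A"
    proof (intro allI impI)
      fix a b assume ab: "(a, b) \<in> AH" "a \<in> insert u S" "b \<in> insert u S"
      have ne: "a \<noteq> b" using ab irr by blast
      have uV: "u \<in> VH - S" using u by blast
      have Cadj: "\<forall>y\<in>C u. \<forall>v\<in>S. ((v, u) \<in> AH \<longrightarrow> (f v, y) \<in> A) \<and> ((u, v) \<in> AH \<longrightarrow> (y, f v) \<in> A)"
        using Cprop uV by blast
      show "(f' a, f' b) \<in> A"
      proof (cases "a = u")
        case True
        hence bS: "b \<in> S" "b \<noteq> u" using ab ne by auto
        have "(x, f b) \<in> A" using Cadj x(1) bS ab(1) True by blast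
        thus ?thesis using True bS unfolding f'_def by simp
      next
        case aF: False
        hence aS: "a \<in> S" using ab by blast
        show ?thesis
        proof (cases "b = u")
          case True
          have "(f a, x) \<in> A" using Cadj x(1) aS ab(1) True by blast
          thus ?thesis using True aF unfolding f'_def by simp
        next
          case False
          hence "b \<in> S" using ab by blast
          thus ?thesis using arcs ab(1) aS aF False unfolding f'_def by simp
        qed
      qed
    qed
    show "\<forall>w\<in>VH - insert u S. C' w \<subseteq> Vs (c w) \<and> real (card (C' w)) \<ge> 10 ^ (k - card (insert u S)) * \<delta> * real n
          \<and> (\<forall>y\<in>C' w. \<forall>v\<in>insert u S. ((v, w) \<in> AH \<longrightarrow> (f' v, y) \<in> A) \<and> ((w, v) \<in> AH \<longrightarrow> (y, f' v) \<in> A))"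
    proof
      fix w assume w: "w \<in> VH - insert u S"
      hence wS: "w \<in> VH - S" and wW: "w \<in> W" and wu: "w \<noteq> u" using W_def by auto
      have Cw: "C w \<subseteq> Vs (c w)" "real (card (C w)) \<ge> 10 ^ m * \<delta> * real n"
        and adj: "\<forall>y\<in>C w. \<forall>v\<in>S. ((v, w) \<in> AH \<longrightarrow> (f v, y) \<in> A) \<and> ((w, v) \<in> AH \<longrightarrow> (y, f v) \<in> A)"
        using Cprop wS m_def by auto
      have sub: "C' w \<subseteq> C w" unfolding C'_def by auto
      have xb: "x \<notin> bad w" using x(2) wW Bad_def by blast
      have tgt: "10 ^ (m - 1) * \<delta> * real n = (10 ^ m * \<delta> * real n) / 10" using pm by simp
      have crd: "real (card (C' w)) \<ge> 10 ^ (m - 1) * \<delta> * real n"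
      proof (cases "(u, w) \<in> AH")
        case True
        hence "\<not> real (card {y\<in>C w. (x, y) \<in> A}) < real (card (C w)) / 10"
          using xb x(1) unfolding bad_def by auto
        hence "real (card {y\<in>C w. (x, y) \<in> A}) \<ge> real (card (C w)) / 10" by linarith
        moreover have "(10 ^ m * \<delta> * real n) / 10 \<le> real (card (C w)) / 10"
          using Cw(2) by (intro divide_right_mono) auto
        moreover have "C' w = {y\<in>C w. (x, y) \<in> A}" using True unfolding C'_def by simp
        ultimately show ?thesis using tgt by (simp only:; linarith)
      next
        case F: False
        show ?thesis
        proof (cases "(w, u) \<in> AH")
          case True
          hence "\<not> real (card {y\<in>C w. (y, x) \<in> A}) < real (card (C w)) / 10"
            using xb x(1) F unfolding bad_def by auto
          hence "real (card {y\<in>C w. (y, x) \<in> A}) \<ge> real (card (C w)) / 10" by linarith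
          moreover have "(10 ^ m * \<delta> * real n) / 10 \<le> real (card (C w)) / 10"
            using Cw(2) by (intro divide_right_mono) auto
          moreover have "C' w = {y\<in>C w. (y, x) \<in> A}" using True F unfolding C'_def by simp
          ultimately show ?thesis using tgt by (simp only:; linarith)
        next
          case False
          have "10 ^ (m - 1) * \<delta> * real n \<le> 10 ^ m * \<delta> * real n" proof -
            have "(10::real) ^ m * (\<delta> * real n) > 0" using dn by simp
            hence "(10::real) ^ m * \<delta> * real n > 0" by (simp add: mult.assoc)
            thus ?thesis using tgt by linarith
          qed
          thus ?thesis using False F Cw(2) unfolding C'_def by simp
        qed
      qed
      have adj': "\<forall>y\<in>C' w. \<forall>v\<in>insert u S. ((v, w) \<in> AH \<longrightarrow> (f' v, y) \<in> A) \<and> ((w, v) \<in> AH \<longrightarrow> (y, f' v) \<in> A)"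
      proof (intro ballI)
        fix y v assume y: "y \<in> C' w" and v: "v \<in> insert u S"
        show "((v, w) \<in> AH \<longrightarrow> (f' v, y) \<in> A) \<and> ((w, v) \<in> AH \<longrightarrow> (y, f' v) \<in> A)"
        proof (cases "v = u")
          case True
          then show ?thesis using y asy unfolding C'_def f'_def by auto
        next
          case False
          hence "v \<in> S" using v by blast
          then show ?thesis using adj sub y False unfolding f'_def by auto
        qed
      qed
      show "C' w \<subseteq> Vs (c w) \<and> real (card (C' w)) \<ge> 10 ^ (k - card (insert u S)) * \<delta> * real n
          \<and> (\<forall>y\<in>C' w. \<forall>v\<in>insert u S. ((v, w) \<in> AH \<longrightarrow> (f' v, y) \<in> A) \<and> ((w, v) \<in> AH \<longrightarrow> (y, f' v) \<in> A))"
        using sub Cw(1) crd adj' km by auto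
    qed
  qed
  thus ?thesis using cardS' by blast
qed

lemma reach: "s \<le> k \<Longrightarrow> \<exists>S f C. inv S f C \<and> card S = s"
proof (induction s)
  case 0
  then show ?case using base by fastforce
next
  case (Suc s)
  then obtain S f C where "inv S f C" "card S = s" by auto
  then show ?case using step Suc.prems by fastforce
qed

lemma embed: "\<exists>f. inj_on f VH \<and> (\<forall>v\<in>VH. f v \<in> Vs (c v)) \<and> (\<forall>(u, v)\<in>AH. (f u, f v) \<in> A)"
proof -
  obtain S f C where I: "inv S f C" "card S = k" using reach by blast
  have "S \<subseteq> VH" using I unfolding inv_def by blast
  hence "S = VH" using I(2) cardVH finVH by (simp add: card_subset_eq)
  hence "inj_on f VH \<and> (\<forall>v\<in>VH. f v \<in> Vs (c v)) \<and> (\<forall>(u, v)\<in>AH. (f u, f v) \<in> A)"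
    using I AHsub unfolding inv_def by fast
  thus ?thesis by blast
qed

end

theorem mainTheorem10:
  fixes VH :: "'h set" and AH :: "('h \<times> 'h) set" and k :: nat and \<delta> :: real
  assumes "oriented_graph VH AH" and "card VH = k"
    and "0 < \<delta>" and "\<delta> < 1 / (8 * real k)"
  shows "\<exists>n0::nat. \<forall>p::nat. \<forall>n > n0. \<forall>(V :: nat set) (E :: (nat \<times> nat) set) Vs A c.
           chromatic_number VH AH \<le> p
           \<longrightarrow> card V = n
           \<longrightarrow> p_partite_graph V E p Vs
           \<longrightarrow> (\<forall>i<p. real (card (Vs i)) \<ge> 10 ^ k * \<delta> * real n)
           \<longrightarrow> orientation_of E A
           \<longrightarrow> relevant A p Vs \<delta> n
           \<longrightarrow> proper_colouring VH AH p c
           \<longrightarrow> (\<exists>f. inj_on f VH \<and> (\<forall>v\<in>VH. f v \<in> Vs (c v))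
                   \<and> (\<forall>(u, v)\<in>AH. (f u, f v) \<in> A))"
proof (intro exI[of _ "nat \<lceil>real k / (8 * \<delta>)\<rceil>"] allI impI)
  fix p n :: nat and V :: "nat set" and E :: "(nat \<times> nat) set" and Vs :: "nat \<Rightarrow> nat set"
    and A :: "(nat \<times> nat) set" and c :: "'h \<Rightarrow> nat"
  assume n: "nat \<lceil>real k / (8 * \<delta>)\<rceil> < n"
    and h: "p_partite_graph V E p Vs" "\<forall>i<p. real (card (Vs i)) \<ge> 10 ^ k * \<delta> * real n"
      "relevant A p Vs \<delta> n" "proper_colouring VH AH p c"
  have "real k / (8 * \<delta>) \<le> real (nat \<lceil>real k / (8 * \<delta>)\<rceil>)" by linarith
  also have "\<dots> < real n" using n by simp
  finally have "real k < 8 * \<delta> * real n" using assms(3) by (simp add: pos_divide_less_eq mult.commute)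
  then interpret emb VH AH k \<delta> p n V E Vs A c
    using assms h by unfold_locales auto
  show "\<exists>f. inj_on f VH \<and> (\<forall>v\<in>VH. f v \<in> Vs (c v)) \<and> (\<forall>(u, v)\<in>AH. (f u, f v) \<in> A)"
    by (rule embed)
qed

end
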